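(* For all integers $m\ge1$ and $0\le k\le m-1$, the polynomials $G_{m,k}(q)$ and $H_{m,k}(q)$ have symmetric coefficients.
   Context: A polynomial $a_0+a_1x+\cdots+a_nx^n$ of degree $n$ has symmetric coefficients if $a_i=a_{n-i}$ for $0\le i\le n$. $q$ is an indeterminate with square root $q^{1/2}$, $[k]=\frac{1-q^k}{1-q}$. Let $T_{m,n}(q)=\sum_{k=1}^n(-1)^{n-k}[k]^mq^{\frac m2(n-k)}$. The polynomials $G_{m,j},H_{m,j}\in\mathbb{Z}[q]$ ($m\ge1$, $0\le j\le m-1$) are those (shown to exist by Guo and Zeng, and uniquely determined) such that for all $n\ge1$: $T_{2m,n}(q)=\sum_{k=1}^m(-q^n)^{m-k}\frac{G_{m,m-k}(q)}{\prod_{i=0}^{m-k}(1+q^{m-i})}([n][n+1])^k$, and $T_{2m-1,n}(q)=(-1)^{m+n}H_{m,m-1}(q^{\frac12})\frac{q^{(m-\frac12)n}}{(1+q^{\frac12})^m\prod_{i=0}^{m-1}(1+q^{m-i-\frac12})}+\frac{1-q^{n+\frac12}}{1-q^{\frac12}}\sum_{k=1}^m(-q^n)^{m-k}\frac{H_{m,m-k}(q^{\frac12})([n][n+1])^{k-1}}{(1+q^{\frac12})^{m-k+1}\prod_{i=0}^{m-k}(1+q^{m-i-\frac12})}$. *)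

theory Defs
  imports "HOL-Computational_Algebra.Polynomial" Complex_Main
begin

definition sym_coeffs :: "'a::zero poly \<Rightarrow> bool" where
  "sym_coeffs p \<longleftrightarrow> (\<forall>i \<le> degree p. coeff p i = coeff p (degree p - i))"

definition qint :: "real \<Rightarrow> nat \<Rightarrow> real" where
  "qint q k = (1 - q ^ k) / (1 - q)"

text \<open>T_(m,n)(q) evaluated at q = t^2, so that q^(1/2) = t and
  q^((m/2)(n-k)) = t^(m(n-k)).\<close>
definition T :: "nat \<Rightarrow> nat \<Rightarrow> real \<Rightarrow> real" where
  "T m n t = (\<Sum>k = 1..n. (-1) ^ (n - k) * (qint (t ^ 2) k) ^ m * t ^ (m * (n - k)))"

definition evalp :: "int poly \<Rightarrow> real \<Rightarrow> real" where
  "evalp p x = poly (map_poly real_of_int p) x"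

text \<open>The even identity defining G_(m,j) (G j stands for G_(m,j)), at q = t^2.\<close>
definition G_identity :: "nat \<Rightarrow> (nat \<Rightarrow> int poly) \<Rightarrow> bool" where
  "G_identity m G \<longleftrightarrow> (\<forall>n \<ge> 1. \<forall>t::real. t > 0 \<and> t \<noteq> 1 \<longrightarrow>
     T (2 * m) n t =
       (\<Sum>k = 1..m. (- ((t ^ 2) ^ n)) ^ (m - k) * evalp (G (m - k)) (t ^ 2)
          / (\<Prod>i = 0..m - k. 1 + (t ^ 2) ^ (m - i))
          * (qint (t ^ 2) n * qint (t ^ 2) (n + 1)) ^ k))"

text \<open>The odd identity defining H_(m,j) (H j stands for H_(m,j)), at q = t^2,
  q^(1/2) = t; q^(m-i-1/2) = t^(2(m-i)-1), q^((m-1/2)n) = t^((2m-1)n).\<close>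
definition H_identity :: "nat \<Rightarrow> (nat \<Rightarrow> int poly) \<Rightarrow> bool" where
  "H_identity m H \<longleftrightarrow> (\<forall>n \<ge> 1. \<forall>t::real. t > 0 \<and> t \<noteq> 1 \<longrightarrow>
     T (2 * m - 1) n t =
       (-1) ^ (m + n) * evalp (H (m - 1)) t * t ^ ((2 * m - 1) * n)
         / ((1 + t) ^ m * (\<Prod>i = 0..m - 1. 1 + t ^ (2 * (m - i) - 1)))
       + (1 - t ^ (2 * n + 1)) / (1 - t) *
         (\<Sum>k = 1..m. (- ((t ^ 2) ^ n)) ^ (m - k) * evalp (H (m - k)) t
            * (qint (t ^ 2) n * qint (t ^ 2) (n + 1)) ^ (k - 1)
            / ((1 + t) ^ (m - k + 1) * (\<Prod>i = 0..m - k. 1 + t ^ (2 * (m - i) - 1)))))"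

end

theory Submission
  imports Defs
begin

lemma comb_aux:
  "(\<Sum>j\<le>i. ((a+j) choose j) * ((i+d-j) choose (i-j))) = (a+i+d+1) choose i"
proof (induction d arbitrary: i)
  case 0
  have "(\<Sum>j\<le>i. ((a+j) choose j) * ((i+0-j) choose (i-j))) = (\<Sum>j\<le>i. ((a+j) choose j))"
    by (intro sum.cong) auto
  also have "\<dots> = Suc (a+i) choose i" by (rule sum_choose_lower)
  finally show ?case by simp
next
  case (Suc d)
  note outer = Suc.IH
  show ?case
  proof (induction i)
    case 0
    then show ?case by simp
  next
    case (Suc i)
    have split: "((a+j) choose j) * ((Suc i + Suc d - j) choose (Suc i - j)) =
        ((a+j) choose j) * ((Suc i + d - j) choose (Suc i - j)) +
        (if j \<le> i then ((a+j) choose j) * ((i + Suc d - j) choose (i - j)) else 0)"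
      if "j \<le> Suc i" for j
    proof (cases "j \<le> i")
      case True
      then have "Suc i + Suc d - j = Suc (i + d + 1 - j)" "Suc i - j = Suc (i - j)"
        "Suc i + d - j = i + d + 1 - j" "i + Suc d - j = i + d + 1 - j" by auto
      then show ?thesis using True by (simp add: algebra_simps)
    next
      case False
      then have "j = Suc i" using that by auto
      then show ?thesis by simp
    qed
    have "(\<Sum>j\<le>Suc i. ((a+j) choose j) * ((Suc i + Suc d - j) choose (Suc i - j))) =
        (\<Sum>j\<le>Suc i. ((a+j) choose j) * ((Suc i + d - j) choose (Suc i - j))) +
        (\<Sum>j\<le>Suc i. (if j \<le> i then ((a+j) choose j) * ((i + Suc d - j) choose (i - j)) else 0))"
      using split by (simp add: sum.distrib[symmetric])
    also have "(\<Sum>j\<le>Suc i. (if j \<le> i then ((a+j) choose j) * ((i + Suc d - j) choose (i - j)) else 0))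
       = (\<Sum>j\<le>i. ((a+j) choose j) * ((i + Suc d - j) choose (i - j)))"
      by (simp add: sum.atMost_Suc)
    also have "\<dots> = (a + i + Suc d + 1) choose i" by (rule Suc.IH)
    also have "(\<Sum>j\<le>Suc i. ((a+j) choose j) * ((Suc i + d - j) choose (Suc i - j))) = (a + Suc i + d + 1) choose Suc i"
      by (rule outer)
    finally show ?case by simp
  qed
qed

lemma comb_id:
  assumes "i \<le> b"
  shows "(\<Sum>j\<le>i. ((a+j) choose j) * ((b-j) choose (i-j))) = (a+b+1) choose i"
proof -
  obtain d where b: "b = i + d" using assms le_Suc_ex by blast
  show ?thesis using comb_aux[of a i d] by (simp add: b add.assoc)
qed

lemma geom:
  fixes a w :: real
  shows "(w + a) * (\<Sum>k=1..n. (-1)^(n-k) * a^k * w^(n-k)) = a * (a^n - (-1)^n * w^n)"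
proof (induction n)
  case 0
  then show ?case by simp
next
  case (Suc n)
  have "(\<Sum>k=1..Suc n. (-1)^(Suc n-k) * a^k * w^(Suc n-k)) =
      a^Suc n + (\<Sum>k=1..n. (-1)^(Suc n-k) * a^k * w^(Suc n-k))"
    by (simp add: sum.atLeast1_atMost_eq sum.atMost_Suc add.commute)
  also have "(\<Sum>k=1..n. (-1)^(Suc n-k) * a^k * w^(Suc n-k)) = - w * (\<Sum>k=1..n. (-1)^(n-k) * a^k * w^(n-k))"
    unfolding sum_distrib_left
    by (intro sum.cong refl) (auto simp: Suc_diff_le)
  finally have eq: "(\<Sum>k=1..Suc n. (-1)^(Suc n-k) * a^k * w^(Suc n-k)) = a^Suc n - w * (\<Sum>k=1..n. (-1)^(n-k) * a^k * w^(n-k))"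
    by linarith
  have "(w + a) * (\<Sum>k=1..Suc n. (-1)^(Suc n-k) * a^k * w^(Suc n-k)) =
     (w+a) * a^Suc n - w * ((w + a) * (\<Sum>k=1..n. (-1)^(n-k) * a^k * w^(n-k)))"
    unfolding eq by (simp add: algebra_simps)
  also have "\<dots> = (w+a) * a^Suc n - w * (a * (a^n - (-1)^n * w^n))" by (simp only: Suc.IH)
  also have "\<dots> = a * (a ^ Suc n - (-1)^Suc n * w ^ Suc n)" by (simp add: algebra_simps)
  finally show ?case .
qed

lemma T_closed:
  fixes t :: real
  assumes "t > 0" "t \<noteq> 1"
  shows "T M n t = (\<Sum>r\<le>M. of_nat (M choose r) * (-1)^r * (t^(2*r) / (t^M + t^(2*r)))
            * ((t^n)^(2*r) - (-1)^n * (t^n)^M)) / (1 - t^2)^M"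
proof -
  have "T M n t = (\<Sum>k=1..n. (-1)^(n-k) * (1 - (t^2)^k)^M * (t^M)^(n-k)) / (1 - t^2)^M"
    unfolding T_def qint_def sum_divide_distrib
    by (intro sum.cong refl) (simp add: power_divide power_mult)
  also have "(\<Sum>k=1..n. (-1)^(n-k) * (1 - (t^2)^k)^M * (t^M)^(n-k)) =
     (\<Sum>k=1..n. \<Sum>r\<le>M. of_nat (M choose r) * (-1)^r * ((-1)^(n-k) * (t^(2*r))^k * (t^M)^(n-k)))"
  proof (intro sum.cong refl)
    fix k
    have "(1 - (t^2)^k)^M = ((- ((t^2)^k)) + 1)^M" by simp
    also have "\<dots> = (\<Sum>r\<le>M. of_nat (M choose r) * (- ((t^2)^k))^r * 1^(M-r))"
      by (rule binomial_ring)
    finally have "(1 - (t^2)^k)^M = (\<Sum>r\<le>M. of_nat (M choose r) * (-1)^r * (t^(2*r))^k)"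
      by (simp add: power_minus' power_mult[symmetric] power_mult_distrib ac_simps)
    then show "(-1)^(n-k) * (1 - (t^2)^k)^M * (t^M)^(n-k) =
     (\<Sum>r\<le>M. of_nat (M choose r) * (-1)^r * ((-1)^(n-k) * (t^(2*r))^k * (t^M)^(n-k)))"
      by (simp add: sum_distrib_left sum_distrib_right algebra_simps)
  qed
  also have "\<dots> = (\<Sum>r\<le>M. of_nat (M choose r) * (-1)^r * (\<Sum>k=1..n. (-1)^(n-k) * (t^(2*r))^k * (t^M)^(n-k)))"
    by (subst sum.swap) (simp add: sum_distrib_left)
  also have "\<dots> = (\<Sum>r\<le>M. of_nat (M choose r) * (-1)^r * (t^(2*r) / (t^M + t^(2*r)))
            * ((t^n)^(2*r) - (-1)^n * (t^n)^M))"
  proof (intro sum.cong refl)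
    fix r
    have pos: "t^M + t^(2*r) \<noteq> 0" using assms by (metis add_pos_pos less_irrefl zero_less_power)
    have "(\<Sum>k=1..n. (-1)^(n-k) * (t^(2*r))^k * (t^M)^(n-k)) = t^(2*r) * ((t^(2*r))^n - (-1)^n * (t^M)^n) / (t^M + t^(2*r))"
      using geom[of "t^M" "t^(2*r)" n] pos by (simp add: field_simps)
    then show "of_nat (M choose r) * (-1)^r * (\<Sum>k=1..n. (-1)^(n-k) * (t^(2*r))^k * (t^M)^(n-k)) =
      of_nat (M choose r) * (-1)^r * (t^(2*r) / (t^M + t^(2*r))) * ((t^n)^(2*r) - (-1)^n * (t^n)^M)"
      by (simp add: power_mult[symmetric] mult.commute)
  qed
  finally show ?thesis .
qed

lemma sum_rev1: "(\<Sum>k=1..(m::nat). f k) = (\<Sum>j<m. f (m - j))"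
  apply (rule sum.reindex_bij_witness[where i="\<lambda>k. m - k" and j="\<lambda>j. m - j"])
  apply auto
  done

lemma infroots:
  fixes p :: "real poly" and t :: real
  assumes "t > 0" "t \<noteq> 1" "\<And>n. n \<ge> 1 \<Longrightarrow> even n \<Longrightarrow> poly p (t^n) = 0"
  shows "p = 0"
proof (rule ccontr)
  assume "p \<noteq> 0"
  then have fin: "finite {x. poly p x = 0}" by (rule poly_roots_finite)
  have sub: "(\<lambda>k. t^(2*k)) ` {1..} \<subseteq> {x. poly p x = 0}"
    using assms(3) by auto
  have inj: "inj_on (\<lambda>k. t^(2*k)) {1..}"
    by (rule inj_onI) (use assms in \<open>simp add: power_inject_exp'\<close>)
  have "infinite ((\<lambda>k. t^(2*k)) ` {1::nat..})"
    using inj by (simp add: finite_image_iff infinite_Ici)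
  with fin sub show False using finite_subset by blast
qed

lemma tri_real:
  fixes x y :: "nat \<Rightarrow> real" and c :: "nat \<Rightarrow> nat \<Rightarrow> real"
  assumes eq: "\<And>i. i < m \<Longrightarrow> (\<Sum>j<m. x j * c j i) = (\<Sum>j<m. y j * c j i)"
    and diag: "\<And>j. j < m \<Longrightarrow> c j j \<noteq> 0"
    and up: "\<And>i j. i < j \<Longrightarrow> c j i = 0"
  shows "\<And>j. j < m \<Longrightarrow> x j = y j"
proof -
  fix j assume "j < m"
  then show "x j = y j"
  proof (induction j rule: less_induct)
    case (less i)
    have split: "{..<m} = {..<i} \<union> {i} \<union> {i<..<m}" using less.prems by auto
    have s1: "(\<Sum>j<m. x j * c j i) = (\<Sum>j<i. x j * c j i) + x i * c i i"
      unfolding split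
      by (subst sum.union_disjoint, auto intro!: sum.neutral simp: up)+
    have s2: "(\<Sum>j<m. y j * c j i) = (\<Sum>j<i. y j * c j i) + y i * c i i"
      unfolding split
      by (subst sum.union_disjoint, auto intro!: sum.neutral simp: up)+
    have s3: "(\<Sum>j<i. x j * c j i) = (\<Sum>j<i. y j * c j i)"
      using less.IH less.prems by (intro sum.cong) auto
    from eq[OF less.prems] s1 s2 s3 have "x i * c i i = y i * c i i" by simp
    then show ?case using diag[OF less.prems] by simp
  qed
qed

lemma tri_poly:
  fixes P :: "nat \<Rightarrow> real poly" and x y :: "nat \<Rightarrow> real"
  assumes eq: "(\<Sum>j<m. smult (x j) (monom 1 (2*j) * P j)) + R1 = (\<Sum>j<m. smult (y j) (monom 1 (2*j) * P j)) + R2"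
    and P0: "\<And>j. j < m \<Longrightarrow> coeff (P j) 0 \<noteq> 0"
    and R1: "\<And>i. i < m \<Longrightarrow> coeff R1 (2*i) = 0"
    and R2: "\<And>i. i < m \<Longrightarrow> coeff R2 (2*i) = 0"
  shows "\<And>j. j < m \<Longrightarrow> x j = y j"
proof (rule tri_real[where c="\<lambda>j i. coeff (monom 1 (2*j) * P j) (2*i)"])
  fix i assume "i < m"
  have "coeff ((\<Sum>j<m. smult (x j) (monom 1 (2*j) * P j)) + R1) (2*i) =
        coeff ((\<Sum>j<m. smult (y j) (monom 1 (2*j) * P j)) + R2) (2*i)" using eq by simp
  then show "(\<Sum>j<m. x j * coeff (monom 1 (2*j) * P j) (2*i)) = (\<Sum>j<m. y j * coeff (monom 1 (2*j) * P j) (2*i))"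
    using R1 R2 \<open>i < m\<close> by (simp add: coeff_sum)
next
  fix j assume "j < m"
  then show "coeff (monom 1 (2*j) * P j) (2*j) \<noteq> 0" using P0 by (simp add: coeff_monom_mult)
next
  fix i j :: nat assume "i < j"
  then show "coeff (monom 1 (2*j) * P j) (2*i) = 0" by (simp add: coeff_monom_mult)
qed


definition Bs :: "real \<Rightarrow> real poly" where "Bs q = [:1, 0, -(1+q), 0, q:]"

lemma poly_Bs: "poly (Bs q) s = 1 - (1+q)*s^2 + q*s^4"
  by (simp add: Bs_def algebra_simps power2_eq_square power4_eq_xxxx)

lemma Bs0: "coeff (Bs q ^ k) 0 = 1"
  by (simp add: poly_0_coeff_0[symmetric] poly_Bs)

lemma qq:
  fixes t :: real assumes "t \<noteq> 1" "t > 0"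
  shows "qint (t^2) n * qint (t^2) (n+1) = poly (Bs (t^2)) (t^n) / (1-t^2)^2"
proof -
  have "1 - t^2 \<noteq> 0" using assms by (simp add: power2_eq_1_iff) 
  moreover have "(t^2)^n = (t^n)^2" "(t^2)^(n+1) = t^2 * (t^n)^2"
    by (simp_all add: power_mult[symmetric] mult.commute power_add)
  ultimately show ?thesis unfolding qint_def poly_Bs
    by (simp add: field_simps power2_eq_square power4_eq_xxxx)
qed

definition RHS_G :: "nat \<Rightarrow> (nat \<Rightarrow> real) \<Rightarrow> real \<Rightarrow> nat \<Rightarrow> real" where
  "RHS_G m a t n = (\<Sum>k = 1..m. (- ((t ^ 2) ^ n)) ^ (m - k) * a (m - k)
          / (\<Prod>i = 0..m - k. 1 + (t ^ 2) ^ (m - i))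
          * (qint (t ^ 2) n * qint (t ^ 2) (n + 1)) ^ k)"

lemma G_identity_iff: "G_identity m G \<longleftrightarrow> (\<forall>n\<ge>1. \<forall>t::real. t > 0 \<and> t \<noteq> 1 \<longrightarrow>
    T (2*m) n t = RHS_G m (\<lambda>j. evalp (G j) (t^2)) t n)"
  unfolding G_identity_def RHS_G_def by simp

definition DG :: "nat \<Rightarrow> nat \<Rightarrow> real \<Rightarrow> real" where
  "DG m j q = (\<Prod>i = 0..j. 1 + q ^ (m - i))"

definition cG :: "nat \<Rightarrow> (nat \<Rightarrow> real) \<Rightarrow> real \<Rightarrow> nat \<Rightarrow> real" where
  "cG m a t j = (-1)^j * a j / (DG m j (t^2) * (1-t^2)^(2*(m-j)))"

definition RGp :: "nat \<Rightarrow> (nat \<Rightarrow> real) \<Rightarrow> real \<Rightarrow> real poly" where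
  "RGp m a t = (\<Sum>j<m. smult (cG m a t j) (monom 1 (2*j) * Bs (t^2) ^ (m-j)))"

lemma RHS_G_poly:
  fixes t :: real assumes "t > 0" "t \<noteq> 1"
  shows "RHS_G m a t n = poly (RGp m a t) (t^n)"
proof -
  have q1: "1 - t^2 \<noteq> 0" using assms by (simp add: power2_eq_1_iff)
  have "RHS_G m a t n = (\<Sum>j<m. (- ((t ^ 2) ^ n)) ^ j * a j
          / DG m j (t^2) * (qint (t ^ 2) n * qint (t ^ 2) (n + 1)) ^ (m-j))"
    unfolding RHS_G_def sum_rev1 DG_def by (intro sum.cong refl) auto
  also have "\<dots> = poly (RGp m a t) (t^n)"
    unfolding RGp_def poly_sum
  proof (intro sum.cong refl)
    fix j assume "j \<in> {..<m}"
    have e: "(- ((t ^ 2) ^ n)) ^ j = (-1)^j * (t^n)^(2*j)"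
      by (simp add: power_minus' power_mult[symmetric] mult.commute mult.left_commute)
    show "(- ((t ^ 2) ^ n)) ^ j * a j / DG m j (t^2) * (qint (t ^ 2) n * qint (t ^ 2) (n + 1)) ^ (m-j)
      = poly (smult (cG m a t j) (monom 1 (2*j) * Bs (t^2) ^ (m-j))) (t^n)"
      unfolding qq[OF assms(2,1)] e cG_def
      by (simp add: poly_monom power_divide power_mult[symmetric] mult.commute)
  qed
  finally show ?thesis .
qed

lemma DG_pos: "q > 0 \<Longrightarrow> DG m j q > 0"
  unfolding DG_def by (intro prod_pos) (auto intro: add_pos_pos)

lemma G_unique:
  fixes t :: real assumes "t > 0" "t \<noteq> 1"
    and eq: "\<And>n. n \<ge> 1 \<Longrightarrow> RHS_G m a t n = RHS_G m b t n"
    and "j < m"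
  shows "a j = b j"
proof -
  have q1: "1 - t^2 \<noteq> 0" using assms by (simp add: power2_eq_1_iff)
  have "RGp m a t - RGp m b t = 0"
    by (rule infroots[OF assms(1,2)]) (use eq RHS_G_poly[OF assms(1,2)] in auto)
  then have "(\<Sum>j<m. smult (cG m a t j) (monom 1 (2*j) * Bs (t^2) ^ (m-j))) + 0 =
     (\<Sum>j<m. smult (cG m b t j) (monom 1 (2*j) * Bs (t^2) ^ (m-j))) + 0"
    unfolding RGp_def by simp
  from tri_poly[OF this] have "cG m a t j = cG m b t j" using \<open>j < m\<close> Bs0 by auto
  moreover have "DG m j (t^2) \<noteq> 0" using DG_pos[of "t^2" m j] assms by auto
  ultimately show ?thesis unfolding cG_def using q1 by (auto simp: field_simps)
qed


definition RHS_H :: "nat \<Rightarrow> (nat \<Rightarrow> real) \<Rightarrow> real \<Rightarrow> nat \<Rightarrow> real" where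
  "RHS_H m a t n = (-1) ^ (m + n) * a (m - 1) * t ^ ((2 * m - 1) * n)
         / ((1 + t) ^ m * (\<Prod>i = 0..m - 1. 1 + t ^ (2 * (m - i) - 1)))
       + (1 - t ^ (2 * n + 1)) / (1 - t) *
         (\<Sum>k = 1..m. (- ((t ^ 2) ^ n)) ^ (m - k) * a (m - k)
            * (qint (t ^ 2) n * qint (t ^ 2) (n + 1)) ^ (k - 1)
            / ((1 + t) ^ (m - k + 1) * (\<Prod>i = 0..m - k. 1 + t ^ (2 * (m - i) - 1))))"

lemma H_identity_iff: "H_identity m H \<longleftrightarrow> (\<forall>n\<ge>1. \<forall>t::real. t > 0 \<and> t \<noteq> 1 \<longrightarrow>
    T (2*m-1) n t = RHS_H m (\<lambda>j. evalp (H j) t) t n)"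
  unfolding H_identity_def RHS_H_def by simp

definition DH :: "nat \<Rightarrow> nat \<Rightarrow> real \<Rightarrow> real" where
  "DH m j t = (1+t)^(j+1) * (\<Prod>i = 0..j. 1 + t ^ (2 * (m - i) - 1))"

definition cH :: "nat \<Rightarrow> (nat \<Rightarrow> real) \<Rightarrow> real \<Rightarrow> nat \<Rightarrow> real" where
  "cH m a t j = (-1)^j * a j / (DH m j t * (1-t) * (1-t^2)^(2*(m-1-j)))"

definition RHp :: "nat \<Rightarrow> (nat \<Rightarrow> real) \<Rightarrow> real \<Rightarrow> real poly" where
  "RHp m a t = smult ((-1)^m * a (m-1) / DH m (m-1) t) (monom 1 (2*m-1)) +
     (\<Sum>j<m. smult (cH m a t j) (monom 1 (2*j) * ([:1,0,-t:] * Bs (t^2) ^ (m-1-j))))"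

lemma RHS_H_poly:
  fixes t :: real assumes "t > 0" "t \<noteq> 1" "m \<ge> 1" "even n"
  shows "RHS_H m a t n = poly (RHp m a t) (t^n)"
proof -
  have q1: "1 - t^2 \<noteq> 0" using assms by (simp add: power2_eq_1_iff)
  have t1: "1 - t \<noteq> 0" using assms by simp
  have first: "(-1) ^ (m + n) * a (m - 1) * t ^ ((2 * m - 1) * n)
         / ((1 + t) ^ m * (\<Prod>i = 0..m - 1. 1 + t ^ (2 * (m - i) - 1))) =
       poly (smult ((-1)^m * a (m-1) / DH m (m-1) t) (monom 1 (2*m-1))) (t^n)"
    using assms(3,4) unfolding DH_def
    by (simp add: poly_monom power_add power_mult[symmetric] mult.commute)
  have sec: "(\<Sum>k = 1..m. (- ((t ^ 2) ^ n)) ^ (m - k) * a (m - k)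
            * (qint (t ^ 2) n * qint (t ^ 2) (n + 1)) ^ (k - 1)
            / ((1 + t) ^ (m - k + 1) * (\<Prod>i = 0..m - k. 1 + t ^ (2 * (m - i) - 1)))) =
     (\<Sum>j<m. (- ((t ^ 2) ^ n)) ^ j * a j
            * (qint (t ^ 2) n * qint (t ^ 2) (n + 1)) ^ (m-1-j) / DH m j t)"
    unfolding sum_rev1 DH_def by (intro sum.cong refl) (auto simp: Suc_diff_Suc)
  have "(1 - t ^ (2 * n + 1)) / (1 - t) * (\<Sum>j<m. (- ((t ^ 2) ^ n)) ^ j * a j
            * (qint (t ^ 2) n * qint (t ^ 2) (n + 1)) ^ (m-1-j) / DH m j t) =
      poly (\<Sum>j<m. smult (cH m a t j) (monom 1 (2*j) * ([:1,0,-t:] * Bs (t^2) ^ (m-1-j)))) (t^n)"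
    unfolding poly_sum sum_distrib_left
  proof (intro sum.cong refl)
    fix j assume "j \<in> {..<m}"
    have e: "(- ((t ^ 2) ^ n)) ^ j = (-1)^j * (t^n)^(2*j)"
      by (simp add: power_minus' power_mult[symmetric] mult.commute mult.left_commute)
    have e2: "1 - t ^ (2 * n + 1) = poly [:1,0,-t:] (t^n)"
      by (simp add: mult_2 power_add)
    show "(1 - t ^ (2 * n + 1)) / (1 - t) * ((- ((t ^ 2) ^ n)) ^ j * a j
            * (qint (t ^ 2) n * qint (t ^ 2) (n + 1)) ^ (m-1-j) / DH m j t) =
      poly (smult (cH m a t j) (monom 1 (2*j) * ([:1,0,-t:] * Bs (t^2) ^ (m-1-j)))) (t^n)"
      unfolding qq[OF assms(2,1)] e cH_def e2
      by (simp add: poly_monom power_divide power_mult[symmetric] mult.commute mult.left_commute)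
        (simp add: algebra_simps)
  qed
  then show ?thesis unfolding RHS_H_def RHp_def first sec by simp
qed

lemma DH_pos: "t > 0 \<Longrightarrow> DH m j t > 0"
  unfolding DH_def by (intro mult_pos_pos prod_pos) (auto intro: add_pos_pos)

lemma H_unique:
  fixes t :: real assumes "t > 0" "t \<noteq> 1" "m \<ge> 1"
    and eq: "\<And>n. n \<ge> 1 \<Longrightarrow> RHS_H m a t n = RHS_H m b t n"
    and "j < m"
  shows "a j = b j"
proof -
  have q1: "1 - t^2 \<noteq> 0" using assms by (simp add: power2_eq_1_iff)
  have t1: "1 - t \<noteq> 0" using assms by simp
  have "RHp m a t - RHp m b t = 0"
  proof (rule infroots[OF assms(1,2)])
    fix n :: nat assume "n \<ge> 1" "even n"
    then show "poly (RHp m a t - RHp m b t) (t ^ n) = 0"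
      using eq[OF \<open>n \<ge> 1\<close>] RHS_H_poly[OF assms(1,2,3) \<open>even n\<close>, of a] RHS_H_poly[OF assms(1,2,3) \<open>even n\<close>, of b]
      by simp
  qed
  then have "(\<Sum>j<m. smult (cH m a t j) (monom 1 (2*j) * ([:1,0,-t:] * Bs (t^2) ^ (m-1-j)))) + 
       smult ((-1)^m * a (m-1) / DH m (m-1) t) (monom 1 (2*m-1)) =
     (\<Sum>j<m. smult (cH m b t j) (monom 1 (2*j) * ([:1,0,-t:] * Bs (t^2) ^ (m-1-j)))) + 
       smult ((-1)^m * b (m-1) / DH m (m-1) t) (monom 1 (2*m-1))"
    unfolding RHp_def by (simp add: algebra_simps)
  from tri_poly[OF this] have "cH m a t j = cH m b t j" using \<open>j < m\<close>
    by (auto simp: coeff_monom poly_0_coeff_0[symmetric] poly_Bs)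
  moreover have "DH m j t \<noteq> 0" using DH_pos[of t m j] assms by auto
  ultimately show ?thesis unfolding cH_def using q1 t1 by (auto simp: field_simps)
qed


lemma sym_from_reflect:
  fixes p :: "int poly" and \<alpha> \<beta> :: nat
  assumes c0: "coeff p 0 \<noteq> 0"
    and rel: "\<And>q::real. 0 < q \<Longrightarrow> q < 1 \<Longrightarrow> q^\<alpha> * evalp p q = q^\<beta> * evalp p (1/q)"
  shows "sym_coeffs p"
proof -
  define r where "r = map_poly real_of_int p"
  define d where "d = degree p"
  have dr: "degree r = d" unfolding r_def d_def by (rule degree_map_poly) auto
  have cr: "coeff r i = of_int (coeff p i)" for i unfolding r_def by (simp add: coeff_map_poly)
  have r0: "coeff r 0 \<noteq> 0" using c0 cr by simp
  then have rnz: "r \<noteq> 0" by auto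
  have "monom 1 (\<alpha>+d) * r - monom 1 \<beta> * reflect_poly r = 0"
  proof (rule infroots[of "1/2"])
    fix n :: nat assume "n \<ge> 1" "even n"
    define q :: real where "q = (1/2)^n"
    have q: "0 < q" "q < 1" unfolding q_def using \<open>n \<ge> 1\<close> by (auto intro: power_less_one_iff[THEN iffD2])
    have "poly (reflect_poly r) q = q^d * poly r (1/q)"
      using poly_reflect_poly_nz[of q r] q dr by (simp add: inverse_eq_divide)
    moreover have "q^\<alpha> * poly r q = q^\<beta> * poly r (1/q)" using rel[OF q] unfolding evalp_def r_def .
    ultimately have "q^(\<alpha>+d) * poly r q = q^\<beta> * poly (reflect_poly r) q"
      by (simp add: power_add algebra_simps)
    then show "poly (monom 1 (\<alpha>+d) * r - monom 1 \<beta> * reflect_poly r) ((1/2)^n) = 0"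
      unfolding q_def by (simp add: poly_monom)
  qed auto
  then have eq: "monom 1 (\<alpha>+d) * r = monom 1 \<beta> * reflect_poly r" by simp
  have lc: "coeff (reflect_poly r) 0 \<noteq> 0" using rnz by simp
  have ab: "\<alpha> + d = \<beta>"
  proof (rule ccontr)
    assume "\<alpha> + d \<noteq> \<beta>"
    then consider "\<alpha> + d < \<beta>" | "\<beta> < \<alpha> + d" by linarith
    then show False
    proof cases
      case 1
      have "coeff (monom 1 (\<alpha>+d) * r) (\<alpha>+d) = coeff (monom 1 \<beta> * reflect_poly r) (\<alpha>+d)" using eq by simp
      then show False using 1 r0 by (simp add: coeff_monom_mult)
    next
      case 2
      have "coeff (monom 1 (\<alpha>+d) * r) \<beta> = coeff (monom 1 \<beta> * reflect_poly r) \<beta>" using eq by simp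
      then show False using 2 lc by (simp add: coeff_monom_mult)
    qed
  qed
  have ck: "coeff r k = coeff (reflect_poly r) k" for k
  proof -
    have "coeff (monom 1 (\<alpha>+d) * r) (k + \<beta>) = coeff (monom 1 \<beta> * reflect_poly r) (k + \<beta>)" using eq by simp
    then show ?thesis using ab by (simp add: coeff_monom_mult)
  qed
  show ?thesis unfolding sym_coeffs_def
  proof (intro allI impI)
    fix i assume "i \<le> degree p"
    have "real_of_int (coeff p i) = real_of_int (coeff p (degree p - i))"
      using ck[of i] \<open>i \<le> degree p\<close> by (simp add: cr coeff_reflect_poly dr d_def)
    then show "coeff p i = coeff p (degree p - i)" by simp
  qed
qed


lemma qint_inv:
  fixes q :: real assumes "q > 0" "q \<noteq> 1" "n \<ge> 1"
  shows "qint (1/q) n = qint q n / q^(n-1)"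
proof -
  obtain n' where n: "n = Suc n'" using assms(3) by (cases n) auto
  have "1 - q \<noteq> 0" "q - 1 \<noteq> 0" using assms by auto
  then show ?thesis unfolding qint_def n using assms(1)
    by (simp add: field_simps power_one_over)
qed

lemma prod_inv:
  fixes x :: real assumes "x > 0"
  shows "(\<Prod>i\<in>A. 1 + (1/x)^(f i)) * x^(\<Sum>i\<in>A. f i) = (\<Prod>i\<in>A. 1 + x^(f i))"
proof -
  have "(\<Prod>i\<in>A. 1 + (1/x)^(f i)) * x^(\<Sum>i\<in>A. f i) = (\<Prod>i\<in>A. (1 + (1/x)^(f i)) * x^(f i))"
    by (simp add: power_sum prod.distrib)
  also have "\<dots> = (\<Prod>i\<in>A. 1 + x^(f i))"
    using assms by (intro prod.cong refl) (simp add: field_simps power_one_over)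
  finally show ?thesis .
qed

lemma T_inv:
  fixes t :: real assumes "t > 0" "t \<noteq> 1" "n \<ge> 1"
  shows "T M n (1/t) * t^(2*M*(n-1)) = T M n t"
  unfolding T_def sum_distrib_right
proof (intro sum.cong refl)
  fix k assume k: "k \<in> {1..n}"
  have q: "t^2 > 0" "t^2 \<noteq> 1" using assms by (auto simp: power2_eq_1_iff)
  have e: "(1/t)^2 = 1/t^2" by (simp add: power_one_over)
  have e2: "t^(2*M*(n-1)) = (t^(k-1))^(2*M) * (t^(n-k))^(2*M)"
  proof -
    obtain k' d where kd: "k = Suc k'" "n = Suc k' + d" using k by (metis atLeastAtMost_iff le_Suc_ex not0_implies_Suc not_one_le_zero)
    have "2*M*(n-1) = (k-1)*(2*M) + (n-k)*(2*M)" unfolding kd by (simp add: algebra_simps)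
    then show ?thesis by (simp add: power_add power_mult)
  qed
  have e3: "(t^2)^(k-1) = (t^(k-1))^2" by (simp add: power_mult[symmetric] mult.commute)
  have tz: "t^(k-1) \<noteq> 0" "t^(n-k) \<noteq> 0" using assms by auto
  show "(-1)^(n-k) * qint ((1/t)^2) k ^ M * (1/t)^(M*(n-k)) * t^(2*M*(n-1)) =
        (-1)^(n-k) * qint (t^2) k ^ M * t^(M*(n-k))"
  proof -
    have k1: "k \<ge> 1" using k by simp
    have tne: "t \<noteq> 0" using assms by simp
    show ?thesis unfolding e qint_inv[OF q k1] e2 e3 using k tz tne
    by (simp add: power_divide power_one_over power_mult[symmetric] field_simps)
       (simp add: power_mult ac_simps power2_eq_square)
  qed
qed

lemma keyG:
  fixes q y A D Z S :: real and j k :: nat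
  assumes "q > 0" "y > 0" "D \<noteq> 0"
  shows "(-(1/(q*y)))^j * A / (D / S) * (Z/(y*(q*y)))^k * y^(2*(j+k)) =
         (-(q*y))^j * (A * (S * q^k) / q^(2*(j+k))) / D * Z^k"
  using assms
  by (simp add: field_simps power_mult_distrib power_add mult_2 power_minus') (simp add: power_mult power2_eq_square ac_simps)

definition SG :: "nat \<Rightarrow> nat \<Rightarrow> nat" where "SG m j = (\<Sum>i=0..j. m - i)"

lemma DG_inv: "(q::real) > 0 \<Longrightarrow> DG m j (1/q) = DG m j q / q^(SG m j)"
  using prod_inv[of q "\<lambda>i. m - i" "{0..j}"] unfolding DG_def SG_def
  by (simp add: field_simps)

lemma RHS_G_alt: "RHS_G m a t n = (\<Sum>j<m. (- ((t ^ 2) ^ n)) ^ j * a j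
          / DG m j (t^2) * (qint (t ^ 2) n * qint (t ^ 2) (n + 1)) ^ (m-j))"
    unfolding RHS_G_def sum_rev1 DG_def by (intro sum.cong refl) auto

lemma RHS_G_inv:
  fixes t :: real assumes "t > 0" "t \<noteq> 1" "n \<ge> 1"
  shows "RHS_G m a (1/t) n * t^(4*m*(n-1)) = RHS_G m (\<lambda>j. a j * (t^2)^(SG m j + (m-j)) / (t^2)^(2*m)) t n"
  unfolding RHS_G_alt sum_distrib_right
proof (intro sum.cong refl)
  fix j assume "j \<in> {..<m}"
  then obtain k where mk: "m = j + k" "m - j = k" by (metis add_diff_cancel_left' lessThan_iff less_imp_add_positive)
  obtain n' where n: "n = Suc n'" using assms(3) by (cases n) auto
  define q where "q = t^2"
  define y where "y = q^n'"
  have q: "q > 0" "q \<noteq> 1" using assms unfolding q_def by (auto simp: power2_eq_1_iff)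
  have y: "y > 0" unfolding y_def using q by simp
  have e1: "(1/t)^2 = 1/q" unfolding q_def by (simp add: power_one_over)
  have e2: "(1/q)^n = 1/(q*y)" unfolding y_def n by (simp add: power_one_over)
  have e3: "qint (1/q) n * qint (1/q) (n+1) = (qint q n * qint q (n+1)) / (y * (q*y))"
    using qint_inv[OF q, of n] qint_inv[OF q, of "n+1"] unfolding y_def n by simp
  have e4: "t^(4*m*(n-1)) = y^(2*(j+k))" unfolding y_def q_def n mk
    by (simp add: power_mult[symmetric] ac_simps)
  have e5: "q^n = q*y" unfolding y_def n by simp
  have D: "DG m j q \<noteq> 0" using DG_pos[OF q(1)] by (metis less_irrefl)
  have e6: "q^(SG m j + (m-j)) = q^SG m j * q^k" using mk by (simp add: power_add)
  show "(- (((1/t) ^ 2) ^ n)) ^ j * a j / DG m j ((1/t)^2) * (qint ((1/t) ^ 2) n * qint ((1/t) ^ 2) (n + 1)) ^ (m-j) * t^(4*m*(n-1))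
      = (- ((t ^ 2) ^ n)) ^ j * (a j * (t^2)^(SG m j + (m-j)) / (t^2)^(2*m))
          / DG m j (t^2) * (qint (t ^ 2) n * qint (t ^ 2) (n + 1)) ^ (m-j)"
    unfolding e1 e2 e3 e4 DG_inv[OF q(1)] q_def[symmetric] e5 e6
    using keyG[OF q(1) y D, where j=j and k=k and A="a j" and S="q^SG m j" and Z="qint q n * qint q (n+1)"] mk(2)
    unfolding mk(1) by simp
qed

lemma G_reflect:
  assumes G: "G_identity m G" and "j < m" and q: "0 < q" "q < (1::real)"
  shows "q^(2*m) * evalp (G j) q = q^(SG m j + (m-j)) * evalp (G j) (1/q)"
proof -
  define t where "t = sqrt q"
  have t: "t > 0" "t \<noteq> 1" "t^2 = q" using q unfolding t_def by auto
  have ti: "1/t > 0" "1/t \<noteq> 1" using t by auto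
  have Gi: "\<And>n t. n \<ge> 1 \<Longrightarrow> t > 0 \<Longrightarrow> t \<noteq> 1 \<Longrightarrow> T (2*m) n t = RHS_G m (\<lambda>j. evalp (G j) (t^2)) t n"
    using G unfolding G_identity_iff by blast
  have "evalp (G j) (t^2) = evalp (G j) ((1/t)^2) * (t^2)^(SG m j + (m-j)) / (t^2)^(2*m)"
  proof (rule G_unique[OF t(1,2) _ \<open>j < m\<close>, where b="\<lambda>j. evalp (G j) ((1/t)^2) * (t^2)^(SG m j + (m-j)) / (t^2)^(2*m)"])
    fix n :: nat assume n: "n \<ge> 1"
    have "RHS_G m (\<lambda>j. evalp (G j) (t^2)) t n = T (2*m) n t" using Gi[OF n t(1,2)] by simp
    also have "\<dots> = T (2*m) n (1/t) * t^(2*(2*m)*(n-1))" by (rule T_inv[OF t(1,2) n, symmetric])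
    also have "\<dots> = RHS_G m (\<lambda>j. evalp (G j) ((1/t)^2)) (1/t) n * t^(4*m*(n-1))"
      using Gi[OF n ti] by (simp add: ac_simps)
    also have "\<dots> = RHS_G m (\<lambda>j. evalp (G j) ((1/t)^2) * (t^2)^(SG m j + (m-j)) / (t^2)^(2*m)) t n"
      by (rule RHS_G_inv[OF t(1,2) n])
    finally show "RHS_G m (\<lambda>j. evalp (G j) (t^2)) t n = RHS_G m (\<lambda>j. evalp (G j) ((1/t)^2) * (t^2)^(SG m j + (m-j)) / (t^2)^(2*m)) t n" .
  qed
  then show ?thesis using t q by (simp add: power_one_over field_simps)
qed

definition SH :: "nat \<Rightarrow> nat \<Rightarrow> nat" where "SH m j = (j+1) + (\<Sum>i=0..j. 2*(m-i)-1)"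

lemma DH_inv: "(t::real) > 0 \<Longrightarrow> DH m j (1/t) = DH m j t / t^(SH m j)"
proof -
  assume t: "t > 0"
  have "(\<Prod>i=0..j. 1 + (1/t)^(2*(m-i)-1)) * t^(\<Sum>i=0..j. 2*(m-i)-1) = (\<Prod>i=0..j. 1 + t^(2*(m-i)-1))"
    by (rule prod_inv[OF t])
  moreover have "(1 + 1/t)^(j+1) * t^(j+1) = (1+t)^(j+1)"
    using t by (simp add: power_mult_distrib[symmetric] field_simps)
  ultimately show ?thesis unfolding DH_def SH_def using t
    by (simp add: field_simps power_add)
qed

lemma RHS_H_alt:
  assumes "m \<ge> 1"
  shows "RHS_H m a t n = (-1) ^ (m + n) * a (m - 1) * t ^ ((2 * m - 1) * n) / DH m (m-1) t
   + (1 - t ^ (2 * n + 1)) / (1 - t) * (\<Sum>j<m. (- ((t ^ 2) ^ n)) ^ j * a j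
            * (qint (t ^ 2) n * qint (t ^ 2) (n + 1)) ^ (m-1-j) / DH m j t)"
proof -
  have sec: "(\<Sum>k = 1..m. (- ((t ^ 2) ^ n)) ^ (m - k) * a (m - k)
            * (qint (t ^ 2) n * qint (t ^ 2) (n + 1)) ^ (k - 1)
            / ((1 + t) ^ (m - k + 1) * (\<Prod>i = 0..m - k. 1 + t ^ (2 * (m - i) - 1)))) =
     (\<Sum>j<m. (- ((t ^ 2) ^ n)) ^ j * a j
            * (qint (t ^ 2) n * qint (t ^ 2) (n + 1)) ^ (m-1-j) / DH m j t)"
    unfolding sum_rev1 DH_def by (intro sum.cong refl) (auto simp: Suc_diff_Suc)
  show ?thesis unfolding RHS_H_def sec using assms by (simp add: DH_def)
qed

lemma keyH1:
  fixes t u A D S :: real and j :: nat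
  assumes "t > 0" "u > 0" "D \<noteq> 0"
  shows "C * A * (1/(t*u))^(2*j+1) / (D/S) * u^(2*(2*j+1)) = C * (A * (t^(2*0) * S) / t^(2*(2*j+1))) * (t*u)^(2*j+1) / D"
  using assms
  by (simp add: field_simps power_mult_distrib power_add mult_2 power_minus') (simp add: power_mult power2_eq_square power4_eq_xxxx power_mult_distrib ac_simps)

lemma keyH2:
  fixes t u A D Z S :: real and j k :: nat
  assumes "t > 0" "u > 0" "D \<noteq> 0"
  shows "(-(1/(t^2*u^2)))^j * A * (Z/(u^2*(t^2*u^2)))^k / (D/S) * u^(2*(2*j+2*k+1)) / (t^2*u^2) =
     (-(t^2*u^2))^j * (A * (t^(2*k) * S) / t^(2*(2*j+2*k+1))) * Z^k / D"
  using assms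
  by (simp add: field_simps power_mult_distrib power_add mult_2 power_minus') (simp add: power_mult power2_eq_square power4_eq_xxxx power_mult_distrib ac_simps)


lemma RHS_H_inv:
  fixes t :: real assumes "t > 0" "t \<noteq> 1" "n \<ge> 1" "m \<ge> 1"
  shows "RHS_H m a (1/t) n * t^(2*(2*m-1)*(n-1)) = RHS_H m (\<lambda>j. a j * t^(2*(m-1-j) + SH m j) / t^(2*(2*m-1))) t n"
proof -
  obtain n' where n: "n = Suc n'" using assms(3) by (cases n) auto
  obtain m0 where m: "m = Suc m0" using assms(4) by (cases m) auto
  define u where "u = t^n'"
  have u: "u > 0" unfolding u_def using assms by simp
  have t0: "t \<noteq> 0" using assms by simp
  have q: "t^2 > 0" "t^2 \<noteq> 1" using assms by (auto simp: power2_eq_1_iff)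
  have E: "t^(2*(2*m-1)*(n-1)) = u^(2*(2*m0+1))"
  proof -
    have ex: "2*(2*m-1)*(n-1) = n'*(2*(2*m0+1))" unfolding m n by simp
    show ?thesis unfolding u_def ex by (rule power_mult)
  qed
  have D0: "DH m j t \<noteq> 0" for j using DH_pos[OF assms(1), of m j] by simp
  have first: "(-1) ^ (m + n) * a (m - 1) * (1/t) ^ ((2 * m - 1) * n) / DH m (m-1) (1/t) * t^(2*(2*m-1)*(n-1))
     = (-1) ^ (m + n) * (a (m - 1) * t^(2*(m-1-(m-1)) + SH m (m-1)) / t^(2*(2*m-1))) * t ^ ((2 * m - 1) * n) / DH m (m-1) t"
  proof -
    have ex: "(2*m-1)*n = (2*m0+1) + n'*(2*m0+1)" unfolding m n by simp
    have e2: "t ^ ((2 * m - 1) * n) = (t*u)^(2*m0+1)"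
      unfolding u_def ex power_add power_mult_distrib power_mult by (simp only: mult_ac)
    have e1: "(1/t) ^ ((2 * m - 1) * n) = (1/(t*u))^(2*m0+1)"
      using e2 by (simp add: power_one_over)
    have e3: "t^(2*(m-1-(m-1)) + SH m (m-1)) = t^(2*0) * t^SH m (m-1)" by simp
    show ?thesis unfolding e1 e2 e3 E DH_inv[OF assms(1)] m[symmetric]
      using keyH1[OF assms(1) u D0, where C="(-1)^(m+n)" and A="a (m-1)" and S="t^SH m (m-1)" and j=m0] m by simp
  qed
  have P: "(1 - (1/t) ^ (2 * n + 1)) / (1 - 1/t) = (1 - t ^ (2 * n + 1)) / (1 - t) / (t^2*u^2)"
  proof -
    have A: "t^(2*n+1) = t^3 * u^2"
    proof -
      have ex2: "2*n+1 = 3 + n'*2" unfolding n by simp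
      show ?thesis unfolding u_def ex2 power_add power_mult ..
    qed
    have auxP: "\<And>A::real. A \<noteq> 0 \<Longrightarrow> (1 - 1/A)/(1 - 1/t) = (1-A)/(1-t) * (t/A)"
      using t0 assms(2) by (simp add: field_simps)
    have A0: "t^(2*n+1) \<noteq> 0" using t0 by simp
    have "t / (t^3 * u^2) = 1 / (t^2*u^2)" using t0 u by (simp add: power2_eq_square power3_eq_cube)
    then show ?thesis unfolding power_one_over auxP[OF A0] using A by simp
  qed
  have S: "(\<Sum>j<m. (- (((1/t) ^ 2) ^ n)) ^ j * a j
            * (qint ((1/t) ^ 2) n * qint ((1/t) ^ 2) (n + 1)) ^ (m-1-j) / DH m j (1/t)) * t^(2*(2*m-1)*(n-1)) / (t^2*u^2)
        = (\<Sum>j<m. (- ((t ^ 2) ^ n)) ^ j * (a j * t^(2*(m-1-j) + SH m j) / t^(2*(2*m-1)))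
            * (qint (t ^ 2) n * qint (t ^ 2) (n + 1)) ^ (m-1-j) / DH m j t)"
    unfolding sum_distrib_right sum_divide_distrib
  proof (intro sum.cong refl)
    fix j assume "j \<in> {..<m}"
    then obtain k where jk: "m0 = j + k" "m - 1 - j = k" unfolding m
      by (metis add_diff_cancel_left' diff_Suc_1 lessThan_iff less_Suc_eq_le le_Suc_ex)
    have e1: "((1/t) ^ 2) ^ n = 1/(t^2*u^2)" "(t ^ 2) ^ n = t^2*u^2" unfolding u_def n
      by (simp_all add: power_one_over power_mult[symmetric] power_mult_distrib[symmetric] ac_simps)
    have e2: "qint ((1/t) ^ 2) n * qint ((1/t) ^ 2) (n + 1) = (qint (t^2) n * qint (t^2) (n+1)) / (u^2*(t^2*u^2))"
      using qint_inv[OF q, of n] qint_inv[OF q, of "n+1"] unfolding u_def n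
      by (simp add: power_one_over power_mult[symmetric] power_mult_distrib[symmetric] ac_simps)
    have e3: "t^(2*k + SH m j) = t^(2*k) * t^SH m j" by (simp add: power_add)
    have e4: "2*m - 1 = 2*j+2*k+1" "2*m0+1 = 2*j+2*k+1" using jk m by auto
    show "(- (((1/t) ^ 2) ^ n)) ^ j * a j
            * (qint ((1/t) ^ 2) n * qint ((1/t) ^ 2) (n + 1)) ^ (m-1-j) / DH m j (1/t) * t^(2*(2*m-1)*(n-1)) / (t^2*u^2)
        = (- ((t ^ 2) ^ n)) ^ j * (a j * t^(2*(m-1-j) + SH m j) / t^(2*(2*m-1)))
            * (qint (t ^ 2) n * qint (t ^ 2) (n + 1)) ^ (m-1-j) / DH m j t"
      unfolding E unfolding e1 e2 e4 DH_inv[OF assms(1)] jk(2) e3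
      by (rule keyH2[OF assms(1) u D0])
  qed
  have aux: "\<And>a k s x :: real. (a / k) * s * x = a * (s * x / k)" by simp
  show ?thesis
    unfolding RHS_H_alt[OF assms(4)] distrib_right first P aux S[unfolded E[symmetric]] ..
qed


lemma H_reflect:
  assumes H: "H_identity m H" and "m \<ge> 1" "j < m" and t: "0 < t" "t < (1::real)"
  shows "t^(2*(2*m-1)) * evalp (H j) t = t^(2*(m-1-j) + SH m j) * evalp (H j) (1/t)"
proof -
  have t1: "t \<noteq> 1" using t by simp
  have ti: "1/t > 0" "1/t \<noteq> 1" using t by auto
  have Hi: "\<And>n t. n \<ge> 1 \<Longrightarrow> t > 0 \<Longrightarrow> t \<noteq> 1 \<Longrightarrow> T (2*m-1) n t = RHS_H m (\<lambda>j. evalp (H j) t) t n"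
    using H unfolding H_identity_iff by blast
  have "evalp (H j) t = evalp (H j) (1/t) * t^(2*(m-1-j) + SH m j) / t^(2*(2*m-1))"
  proof (rule H_unique[OF t(1) t1 \<open>m \<ge> 1\<close> _ \<open>j < m\<close>, where b="\<lambda>j. evalp (H j) (1/t) * t^(2*(m-1-j) + SH m j) / t^(2*(2*m-1))"])
    fix n :: nat assume n: "n \<ge> 1"
    have "RHS_H m (\<lambda>j. evalp (H j) t) t n = T (2*m-1) n t" using Hi[OF n t(1) t1] by simp
    also have "\<dots> = T (2*m-1) n (1/t) * t^(2*(2*m-1)*(n-1))" by (rule T_inv[OF t(1) t1 n, symmetric])
    also have "\<dots> = RHS_H m (\<lambda>j. evalp (H j) (1/t)) (1/t) n * t^(2*(2*m-1)*(n-1))"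
      using Hi[OF n ti] by simp
    also have "\<dots> = RHS_H m (\<lambda>j. evalp (H j) (1/t) * t^(2*(m-1-j) + SH m j) / t^(2*(2*m-1))) t n"
      by (rule RHS_H_inv[OF t(1) t1 n \<open>m \<ge> 1\<close>])
    finally show "RHS_H m (\<lambda>j. evalp (H j) t) t n = RHS_H m (\<lambda>j. evalp (H j) (1/t) * t^(2*(m-1-j) + SH m j) / t^(2*(2*m-1))) t n" .
  qed
  then show ?thesis using t by (simp add: field_simps)
qed


definition wt :: "nat \<Rightarrow> nat \<Rightarrow> real \<Rightarrow> real" where
  "wt M r t = t^(2*r) / (t^M + t^(2*r))"

definition LT :: "nat \<Rightarrow> real \<Rightarrow> real poly" where
  "LT M t = smult (1/(1-t^2)^M) (\<Sum>r\<le>M. smult (of_nat (M choose r) * (-1)^r * wt M r t) (monom 1 (2*r) - monom 1 M))"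

lemma T_poly:
  fixes t :: real assumes "t > 0" "t \<noteq> 1" "even n"
  shows "T M n t = poly (LT M t) (t^n)"
  unfolding T_closed[OF assms(1,2)] LT_def wt_def using assms(3)
  by (simp add: poly_sum poly_monom power_mult[symmetric] ac_simps sum_divide_distrib)

lemma G_poly_eq:
  assumes G: "G_identity m G" and t: "t > 0" "t \<noteq> (1::real)"
  shows "LT (2*m) t = RGp m (\<lambda>j. evalp (G j) (t^2)) t"
proof -
  have "LT (2*m) t - RGp m (\<lambda>j. evalp (G j) (t^2)) t = 0"
  proof (rule infroots[OF t])
    fix n :: nat assume n: "n \<ge> 1" "even n"
    have "T (2*m) n t = RHS_G m (\<lambda>j. evalp (G j) (t^2)) t n"
      using G n t unfolding G_identity_iff by blast
    then show "poly (LT (2*m) t - RGp m (\<lambda>j. evalp (G j) (t^2)) t) (t^n) = 0"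
      using T_poly[OF t n(2)] RHS_G_poly[OF t] by simp
  qed
  then show ?thesis by simp
qed

lemma H_poly_eq:
  assumes H: "H_identity m H" and m: "m \<ge> 1" and t: "t > 0" "t \<noteq> (1::real)"
  shows "LT (2*m-1) t = RHp m (\<lambda>j. evalp (H j) t) t"
proof -
  have "LT (2*m-1) t - RHp m (\<lambda>j. evalp (H j) t) t = 0"
  proof (rule infroots[OF t])
    fix n :: nat assume n: "n \<ge> 1" "even n"
    have "T (2*m-1) n t = RHS_H m (\<lambda>j. evalp (H j) t) t n"
      using H n t unfolding H_identity_iff by blast
    then show "poly (LT (2*m-1) t - RHp m (\<lambda>j. evalp (H j) t) t) (t^n) = 0"
      using T_poly[OF t n(2)] RHS_H_poly[OF t m n(2)] by simp
  qed
  then show ?thesis by simp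
qed


lemma isCont_right: "isCont f (x::real) \<Longrightarrow> (f \<longlongrightarrow> f x) (at_right x)"
  unfolding isCont_def by (rule tendsto_mono[OF at_le[OF subset_UNIV]])

definition w0 :: "nat \<Rightarrow> nat \<Rightarrow> real" where
  "w0 M r = (if 2*r < M then 1 else if 2*r = M then 1/2 else 0)"

lemma wt_lim: "(wt M r \<longlongrightarrow> w0 M r) (at_right 0)"
proof -
  have ev: "\<forall>\<^sub>F t in at_right (0::real). t > 0" by (rule eventually_at_right_less)
  consider "2*r < M" | "2*r = M" | "2*r > M" by linarith
  then show ?thesis
  proof cases
    case 1
    define d where "d = M - 2*r"
    have d: "M = 2*r + d" "d > 0" using 1 unfolding d_def by auto
    have "((\<lambda>t::real. 1 / (t^d + 1)) \<longlongrightarrow> 1 / (0^d + 1)) (at_right 0)"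
      by (rule isCont_right) (intro continuous_intros, simp add: add_nonneg_eq_0_iff)
    then have "((\<lambda>t::real. 1 / (t^d + 1)) \<longlongrightarrow> w0 M r) (at_right 0)" using 1 d by (simp add: w0_def power_0_left)
    moreover have "\<forall>\<^sub>F t in at_right (0::real). 1 / (t^d + 1) = wt M r t"
      using ev
    proof eventually_elim
      case (elim t)
      have td: "t^d > 0" using elim by simp
      have p: "t^(2*r) > 0" "t^d + 1 > 0" using elim td by (simp, linarith)
      have "wt M r t = t^(2*r) / (t^(2*r) * (t^d+1))" by (simp add: wt_def d power_add distrib_left)
      also have "\<dots> = 1 / (t^d+1)" using p elim by simp
      finally show ?case by simp
    qed
    ultimately show ?thesis by (rule Lim_transform_eventually)
  next
    case 2
    have "\<forall>\<^sub>F t in at_right (0::real). w0 M r = wt M r t"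
      using ev by eventually_elim (simp add: wt_def w0_def 2)
    then show ?thesis by (rule Lim_transform_eventually[OF tendsto_const])
  next
    case 3
    define d where "d = 2*r - M"
    have d: "2*r = M + d" "d > 0" using 3 unfolding d_def by auto
    have "((\<lambda>t::real. t^d / (1 + t^d)) \<longlongrightarrow> 0^d / (1 + 0^d)) (at_right 0)"
      by (rule isCont_right) (intro continuous_intros, simp add: add_nonneg_eq_0_iff)
    then have "((\<lambda>t::real. t^d / (1 + t^d)) \<longlongrightarrow> w0 M r) (at_right 0)" using 3 d by (simp add: w0_def power_0_left)
    moreover have "\<forall>\<^sub>F t in at_right (0::real). t^d / (1 + t^d) = wt M r t"
      using ev
    proof eventually_elim
      case (elim t)
      have td: "t^d > 0" using elim by simp
      have p: "t^M > 0" "1 + t^d > 0" using elim td by (simp, linarith)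
      have "wt M r t = (t^M * t^d) / (t^M * (1 + t^d))" by (simp add: wt_def d power_add distrib_left)
      also have "\<dots> = t^d / (1 + t^d)" using p elim by simp
      finally show ?case by simp
    qed
    ultimately show ?thesis by (rule Lim_transform_eventually)
  qed
qed

definition L0p :: "nat \<Rightarrow> real poly" where
  "L0p M = (\<Sum>r\<le>M. smult (of_nat (M choose r) * (-1)^r * w0 M r) (monom 1 (2*r) - monom 1 M))"

lemma LT_lim: "((\<lambda>t. poly (LT M t) s) \<longlongrightarrow> poly (L0p M) s) (at_right 0)"
proof -
  have "((\<lambda>t. 1/(1-t^2)^M * (\<Sum>r\<le>M. of_nat (M choose r) * (-1)^r * wt M r t * (s^(2*r) - s^M)))
     \<longlongrightarrow> 1/(1-0^2)^M * (\<Sum>r\<le>M. of_nat (M choose r) * (-1)^r * w0 M r * (s^(2*r) - s^M))) (at_right 0)"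
    by (intro tendsto_intros wt_lim) auto
  then show ?thesis unfolding LT_def L0p_def
    by (simp add: poly_sum poly_monom)
qed


lemma RG_lim: "((\<lambda>t. poly (RGp m (\<lambda>j. evalp (G j) (t^2)) t) s) \<longlongrightarrow> poly (RGp m (\<lambda>j. evalp (G j) (0^2)) 0) s) (at_right 0)"
proof (rule isCont_right[where f="\<lambda>t. poly (RGp m (\<lambda>j. evalp (G j) (t^2)) t) s", simplified])
  show "isCont (\<lambda>t. poly (RGp m (\<lambda>j. evalp (G j) (t\<^sup>2)) t) s) 0"
    unfolding RGp_def cG_def DG_def poly_sum poly_smult poly_mult poly_monom poly_power poly_Bs evalp_def
    by (intro continuous_intros) (auto simp: power_0_left)
qed

lemma RH_lim: "((\<lambda>t. poly (RHp m (\<lambda>j. evalp (H j) t) t) s) \<longlongrightarrow> poly (RHp m (\<lambda>j. evalp (H j) 0) 0) s) (at_right 0)"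
proof (rule isCont_right[where f="\<lambda>t. poly (RHp m (\<lambda>j. evalp (H j) t) t) s", simplified])
  show "isCont (\<lambda>t. poly (RHp m (\<lambda>j. evalp (H j) t) t) s) 0"
    unfolding RHp_def cH_def DH_def poly_sum poly_smult poly_mult poly_monom poly_power poly_Bs evalp_def poly_add
    by (intro continuous_intros) (auto simp: power_0_left)
qed

lemma ev01: "\<forall>\<^sub>F t in at_right (0::real). 0 < t \<and> t < 1"
  by (subst eventually_at_right[of 0 1]) (auto intro: exI[of _ 1])

lemma G_L0:
  assumes G: "G_identity m G"
  shows "L0p (2*m) = RGp m (\<lambda>j. evalp (G j) 0) 0"
proof -
  have "poly (L0p (2*m)) s = poly (RGp m (\<lambda>j. evalp (G j) 0) 0) s" for s
  proof (rule tendsto_unique[OF trivial_limit_at_right_real LT_lim])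
    have "\<forall>\<^sub>F t in at_right (0::real). poly (RGp m (\<lambda>j. evalp (G j) (t^2)) t) s = poly (LT (2*m) t) s"
      using ev01 by eventually_elim (simp add: G_poly_eq[OF G])
    from Lim_transform_eventually[OF RG_lim this]
    show "((\<lambda>t. poly (LT (2*m) t) s) \<longlongrightarrow> poly (RGp m (\<lambda>j. evalp (G j) 0) 0) s) (at_right 0)" by simp
  qed
  then show ?thesis by (simp add: poly_eq_poly_eq_iff[symmetric] fun_eq_iff)
qed

lemma H_L0:
  assumes H: "H_identity m H" "m \<ge> 1"
  shows "L0p (2*m-1) = RHp m (\<lambda>j. evalp (H j) 0) 0"
proof -
  have "poly (L0p (2*m-1)) s = poly (RHp m (\<lambda>j. evalp (H j) 0) 0) s" for s
  proof (rule tendsto_unique[OF trivial_limit_at_right_real LT_lim])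
    have "\<forall>\<^sub>F t in at_right (0::real). poly (RHp m (\<lambda>j. evalp (H j) t) t) s = poly (LT (2*m-1) t) s"
      using ev01
    proof eventually_elim
      case (elim t)
      then have "LT (2*m-1) t = RHp m (\<lambda>j. evalp (H j) t) t" by (intro H_poly_eq[OF H]) auto
      then show ?case by simp
    qed
    from Lim_transform_eventually[OF RH_lim this]
    show "((\<lambda>t. poly (LT (2*m-1) t) s) \<longlongrightarrow> poly (RHp m (\<lambda>j. evalp (H j) 0) 0) s) (at_right 0)" by simp
  qed
  then show ?thesis by (simp add: poly_eq_poly_eq_iff[symmetric] fun_eq_iff)
qed


lemma Bs_zero: "Bs 0 = monom (-1) 2 + 1"
  by (simp add: poly_eq_poly_eq_iff[symmetric] fun_eq_iff poly_Bs poly_monom)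

lemma Bs0_coeff: "coeff (Bs 0 ^ k) (2*l) = (-1)^l * of_nat (k choose l)"
proof -
  have "Bs 0 ^ k = (\<Sum>i\<le>k. of_nat (k choose i) * monom (-1) 2 ^ i * 1^(k-i))"
    unfolding Bs_zero by (rule binomial_ring)
  also have "\<dots> = (\<Sum>i\<le>k. monom (of_nat (k choose i) * (-1)^i) (2*i))"
    by (intro sum.cong refl) (simp add: of_nat_mult_conv_smult monom_power smult_monom mult.commute)
  finally have "coeff (Bs 0 ^ k) (2*l) = (\<Sum>i\<le>k. if i = l then of_nat (k choose i) * (-1)^i else 0)"
    by (simp add: coeff_sum coeff_monom)
  also have "\<dots> = (-1)^l * of_nat (k choose l)"
    by (simp add: sum.delta mult.commute)
  finally show ?thesis .
qed

lemma comb_real: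
  assumes "i < m" "i \<le> b" "m \<ge> 1"
  shows "(\<Sum>j<m. ((-1)^j * of_nat ((m-1+j) choose j)) * (if j \<le> i then (-1)^(i-j) * of_nat ((b-j) choose (i-j)) else 0))
     = (-1)^i * (of_nat ((m+b) choose i) :: real)"
proof -
  have "(\<Sum>j<m. ((-1)^j * of_nat ((m-1+j) choose j)) * (if j \<le> i then (-1)^(i-j) * of_nat ((b-j) choose (i-j)) else 0))
     = (\<Sum>j\<le>i. ((-1)^j * of_nat ((m-1+j) choose j)) * ((-1)^(i-j) * of_nat ((b-j) choose (i-j))) :: real)"
    using assms by (intro sum.mono_neutral_cong_right) auto
  also have "\<dots> = (\<Sum>j\<le>i. (-1)^i * of_nat (((m-1+j) choose j) * ((b-j) choose (i-j))))"
  proof (intro sum.cong refl)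
    fix j assume "j \<in> {..i}"
    then have "(-1)^j * (-1)^(i-j) = ((-1)^i :: real)" by (simp add: power_add[symmetric])
    then show "((-1)^j * of_nat ((m-1+j) choose j)) * ((-1)^(i-j) * of_nat ((b-j) choose (i-j))) =
      (-1)^i * (of_nat (((m-1+j) choose j) * ((b-j) choose (i-j))) :: real)"
      by (simp add: algebra_simps)
  qed
  also have "\<dots> = (-1)^i * of_nat (\<Sum>j\<le>i. ((m-1+j) choose j) * ((b-j) choose (i-j)))"
    by (simp add: sum_distrib_left)
  also have "(\<Sum>j\<le>i. ((m-1+j) choose j) * ((b-j) choose (i-j))) = (m-1+b+1) choose i"
    by (rule comb_id[OF assms(2)])
  also have "m-1+b+1 = m+b" using assms by simp
  finally show ?thesis .
qed


lemma L0p_coeff: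
  assumes "2*i < M"
  shows "coeff (L0p M) (2*i) = of_nat (M choose i) * (-1)^i"
proof -
  have "coeff (L0p M) (2*i) = (\<Sum>r\<le>M. if r = i then of_nat (M choose r) * (-1)^r * w0 M r else 0)"
    unfolding L0p_def coeff_sum using assms by (intro sum.cong refl) (auto simp: coeff_monom)
  also have "\<dots> = of_nat (M choose i) * (-1)^i"
    using assms by (simp add: sum.delta w0_def)
  finally show ?thesis .
qed

lemma evalp0: "evalp p 0 = of_int (coeff p 0)"
  unfolding evalp_def by (simp add: poly_0_coeff_0 coeff_map_poly)

lemma G_const:
  assumes G: "G_identity m G" and m: "m \<ge> 1" and j: "j < m"
  shows "coeff (G j) 0 \<noteq> 0"
proof -
  define a0 where "a0 = (\<lambda>j. evalp (G j) 0)"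
  have L: "L0p (2*m) = RGp m a0 0" using G_L0[OF G] unfolding a0_def .
  define c where "c = (\<lambda>j i. coeff (monom 1 (2*j) * Bs 0 ^ (m-j)) (2*i))"
  have c: "c j i = (if j \<le> i then (-1)^(i-j) * of_nat ((m-j) choose (i-j)) else 0)" for j i
  proof -
    have "2*i - 2*j = 2*(i-j)" by simp
    then show ?thesis unfolding c_def coeff_monom_mult using Bs0_coeff by auto
  qed
  have "cG m a0 0 j = (-1)^j * of_nat ((m-1+j) choose j)"
  proof (rule tri_real[where c=c and m=m, OF _ _ _ j])
    fix i assume i: "i < m"
    have "(\<Sum>j<m. cG m a0 0 j * c j i) = coeff (RGp m a0 0) (2*i)"
      unfolding RGp_def c_def by (simp add: coeff_sum)
    also have "\<dots> = of_nat ((2*m) choose i) * (-1)^i" unfolding L[symmetric] using i by (intro L0p_coeff) simp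
    also have "\<dots> = (\<Sum>j<m. ((-1)^j * of_nat ((m-1+j) choose j)) * c j i)"
      unfolding c mult_2 using comb_real[OF i _ m, of m] i by (simp add: mult.commute)
    finally show "(\<Sum>j<m. cG m a0 0 j * c j i) = (\<Sum>j<m. ((-1)^j * of_nat ((m-1+j) choose j)) * c j i)" .
  next
    fix j show "c j j \<noteq> 0" unfolding c by simp
  next
    fix i j :: nat assume "i < j" then show "c j i = 0" unfolding c by simp
  qed
  then have "cG m a0 0 j \<noteq> 0" by simp
  then have "a0 j \<noteq> 0" unfolding cG_def by auto
  then show ?thesis unfolding a0_def evalp0 by simp
qed

lemma H_const:
  assumes H: "H_identity m H" and m: "m \<ge> 1" and j: "j < m"
  shows "coeff (H j) 0 \<noteq> 0"
proof -
  define a0 where "a0 = (\<lambda>j. evalp (H j) 0)"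
  have L: "L0p (2*m-1) = RHp m a0 0" using H_L0[OF H m] unfolding a0_def .
  define c where "c = (\<lambda>j i. coeff (monom 1 (2*j) * ([:1,0,-0:] * Bs 0 ^ (m-1-j))) (2*i))"
  have c: "c j i = (if j \<le> i then (-1)^(i-j) * of_nat ((m-1-j) choose (i-j)) else 0)" for j i
  proof -
    have "2*i - 2*j = 2*(i-j)" by simp
    then show ?thesis unfolding c_def coeff_monom_mult using Bs0_coeff by auto
  qed
  have "cH m a0 0 j = (-1)^j * of_nat ((m-1+j) choose j)"
  proof (rule tri_real[where c=c and m=m, OF _ _ _ j])
    fix i assume i: "i < m"
    have "(\<Sum>j<m. cH m a0 0 j * c j i) = coeff (RHp m a0 0) (2*i)"
      unfolding RHp_def c_def using i by (simp add: coeff_sum coeff_monom)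
    also have "\<dots> = of_nat ((2*m-1) choose i) * (-1)^i" unfolding L[symmetric] using i by (intro L0p_coeff) simp
    also have "\<dots> = (\<Sum>j<m. ((-1)^j * of_nat ((m-1+j) choose j)) * c j i)"
    proof -
      have il: "i \<le> m - 1" using i by simp
      have mm: "m + (m - 1) = 2*m-1" using m by simp
      show ?thesis unfolding c using comb_real[OF i il m] unfolding mm by (simp add: mult.commute)
    qed
    finally show "(\<Sum>j<m. cH m a0 0 j * c j i) = (\<Sum>j<m. ((-1)^j * of_nat ((m-1+j) choose j)) * c j i)" .
  next
    fix j show "c j j \<noteq> 0" unfolding c by simp
  next
    fix i j :: nat assume "i < j" then show "c j i = 0" unfolding c by simp
  qed
  then have "cH m a0 0 j \<noteq> 0" by simp
  then have "a0 j \<noteq> 0" unfolding cH_def by auto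
  then show ?thesis unfolding a0_def evalp0 by simp
qed


theorem corollary3p7:
  fixes m :: nat and G H :: "nat \<Rightarrow> int poly"
  assumes "m \<ge> 1"
    and "G_identity m G"
    and "H_identity m H"
  shows "\<forall>k \<le> m - 1. sym_coeffs (G k) \<and> sym_coeffs (H k)"
proof (intro allI impI conjI)
  fix k assume "k \<le> m - 1"
  then have k: "k < m" using assms(1) by simp
  show "sym_coeffs (G k)"
    by (rule sym_from_reflect[OF G_const[OF assms(2,1) k], where \<alpha>="2*m" and \<beta>="SG m k + (m-k)"])
       (rule G_reflect[OF assms(2) k])
  show "sym_coeffs (H k)"
    by (rule sym_from_reflect[OF H_const[OF assms(3,1) k], where \<alpha>="2*(2*m-1)" and \<beta>="2*(m-1-k) + SH m k"])
       (rule H_reflect[OF assms(3,1) k])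
qed

end
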